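(* Let $(X,d)$ be a complete metric space, let $N\in\mathbb{N}\setminus\{0\}$, let $\alpha:X\times X\rightarrow[0,+\infty)$ be $N$--transitive, and let $T:X\rightarrow X$ be an $\alpha$--contractive mapping of Meir--Keeler type satisfying: (A1) $T$ is $\alpha$--admissible; (A2) there exists $x_{0}\in X$ such that $\alpha(x_{0},Tx_{0})\geq1$; (A3) $T$ is $\alpha$--orbitally continuous. Then $T$ has a fixed point, i.e., there exists $x^{\ast}\in X$ with $Tx^{\ast}=x^{\ast}$.
   Context: $\mathbb{N}$ is the set of non-negative integers; $T^n$ is the $n$-th iterate of $T$. $T$ is an $\alpha$--contractive mapping of Meir--Keeler type if for every $\varepsilon>0$ there exists $\delta(\varepsilon)>0$ such that for all $x,y\in X$: $\varepsilon\leq d(x,y)<\varepsilon+\delta(\varepsilon)$ implies $\alpha(x,y)d(Tx,Ty)<\varepsilon$. $T$ is $\alpha$--admissible if $\alpha(x,y)\geq1$ implies $\alpha(Tx,Ty)\geq1$. $\alpha$ is $N$--transitive if for all $x_0,x_1,\dots,x_{N+1}\in X$ with $\alpha(x_i,x_{i+1})\geq1$ for all $i\in\{0,\dots,N\}$ one has $\alpha(x_0,x_{N+1})\geq1$. A sequence $\{x_n\}$ in $X$ is $(T,\alpha)$--orbital if $x_n=T^nx_0$ and $\alpha(x_n,x_{n+1})\geq1$ for all $n\in\mathbb{N}$. $T$ is $\alpha$--orbitally continuous if for every $(T,\alpha)$--orbital sequence $\{x_n\}$ with $x_n\rightarrow x\in X$ there is a subsequence $\{x_{n(k)}\}$ with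 $Tx_{n(k)}\rightarrow Tx$. *)

theory Defs
  imports "HOL-Analysis.Analysis"
begin

definition alpha_MK_contractive :: "('a::metric_space \<Rightarrow> 'a \<Rightarrow> real) \<Rightarrow> ('a \<Rightarrow> 'a) \<Rightarrow> bool" where
  "alpha_MK_contractive \<alpha> T \<longleftrightarrow>
     (\<forall>\<epsilon>>0. \<exists>\<delta>>0. \<forall>x y. \<epsilon> \<le> dist x y \<and> dist x y < \<epsilon> + \<delta> \<longrightarrow> \<alpha> x y * dist (T x) (T y) < \<epsilon>)"

definition alpha_admissible :: "('a \<Rightarrow> 'a \<Rightarrow> real) \<Rightarrow> ('a \<Rightarrow> 'a) \<Rightarrow> bool" where
  "alpha_admissible \<alpha> T \<longleftrightarrow> (\<forall>x y. \<alpha> x y \<ge> 1 \<longrightarrow> \<alpha> (T x) (T y) \<ge> 1)"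

definition N_transitive :: "nat \<Rightarrow> ('a \<Rightarrow> 'a \<Rightarrow> real) \<Rightarrow> bool" where
  "N_transitive N \<alpha> \<longleftrightarrow>
     (\<forall>xs :: nat \<Rightarrow> 'a. (\<forall>i\<le>N. \<alpha> (xs i) (xs (Suc i)) \<ge> 1) \<longrightarrow> \<alpha> (xs 0) (xs (Suc N)) \<ge> 1)"

definition alpha_orbital :: "('a \<Rightarrow> 'a \<Rightarrow> real) \<Rightarrow> ('a \<Rightarrow> 'a) \<Rightarrow> (nat \<Rightarrow> 'a) \<Rightarrow> bool" where
  "alpha_orbital \<alpha> T x \<longleftrightarrow> (\<forall>n. x n = (T ^^ n) (x 0) \<and> \<alpha> (x n) (x (Suc n)) \<ge> 1)"

definition alpha_orbitally_continuous :: "('a::metric_space \<Rightarrow> 'a \<Rightarrow> real) \<Rightarrow> ('a \<Rightarrow> 'a) \<Rightarrow> bool" where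
  "alpha_orbitally_continuous \<alpha> T \<longleftrightarrow>
     (\<forall>x p. alpha_orbital \<alpha> T x \<and> x \<longlonglongrightarrow> p \<longrightarrow>
        (\<exists>r. strict_mono r \<and> (\<lambda>k. T (x (r k))) \<longlonglongrightarrow> T p))"

end

theory Submission
  imports Defs
begin

lemma mk_nonexp:
  assumes mk: "alpha_MK_contractive \<alpha> T" and a: "\<alpha> a b \<ge> 1"
  shows "dist (T a) (T b) \<le> dist a b"
proof (cases "dist a b = 0")
  case True then show ?thesis by simp
next
  case False
  then have pos: "dist a b > 0" by simp
  from mk pos obtain \<delta> where "\<delta>>0" and H: "\<forall>x y. dist a b \<le> dist x y \<and> dist x y < dist a b + \<delta> \<longrightarrow> \<alpha> x y * dist (T x) (T y) < dist a b"
    unfolding alpha_MK_contractive_def by blast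
  then have "\<alpha> a b * dist (T a) (T b) < dist a b" by auto
  moreover have "1 * dist (T a) (T b) \<le> \<alpha> a b * dist (T a) (T b)"
    using a by (intro mult_right_mono) auto
  ultimately show ?thesis by linarith
qed

lemma mk_step:
  assumes mk: "alpha_MK_contractive \<alpha> T" and a: "\<alpha> a b \<ge> 1"
    and H: "\<forall>x y. \<epsilon> \<le> dist x y \<and> dist x y < \<epsilon> + \<delta> \<longrightarrow> \<alpha> x y * dist (T x) (T y) < \<epsilon>"
    and d: "dist a b < \<epsilon> + \<delta>"
  shows "dist (T a) (T b) < \<epsilon>"
proof (cases "\<epsilon> \<le> dist a b")
  case True
  then have "\<alpha> a b * dist (T a) (T b) < \<epsilon>" using H d by auto
  moreover have "1 * dist (T a) (T b) \<le> \<alpha> a b * dist (T a) (T b)"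
    using a by (intro mult_right_mono) auto
  ultimately show ?thesis by linarith
next
  case False
  then show ?thesis using mk_nonexp[OF mk a] by linarith
qed

theorem theorem2:
  fixes T :: "'a::complete_space \<Rightarrow> 'a" and \<alpha> :: "'a \<Rightarrow> 'a \<Rightarrow> real" and N :: nat
  assumes "N \<ge> 1"
    and "\<And>x y. \<alpha> x y \<ge> 0"
    and "N_transitive N \<alpha>"
    and "alpha_MK_contractive \<alpha> T"
    and "alpha_admissible \<alpha> T"
    and "\<exists>x0. \<alpha> x0 (T x0) \<ge> 1"
    and "alpha_orbitally_continuous \<alpha> T"
  shows "\<exists>x. T x = x"
proof -
  note mk = assms(4)
  obtain x0 where x0: "\<alpha> x0 (T x0) \<ge> 1" using assms(6) by blast
  define x where "x = (\<lambda>n. (T ^^ n) x0)"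
  have xS: "x (Suc n) = T (x n)" for n unfolding x_def by simp
  have x0': "x 0 = x0" unfolding x_def by simp
  have al: "\<alpha> (x n) (x (Suc n)) \<ge> 1" for n
  proof (induction n)
    case 0 then show ?case using x0 by (simp add: xS x0')
  next
    case (Suc n) then show ?case using assms(5) unfolding alpha_admissible_def
      by (metis xS)
  qed
  define d where "d = (\<lambda>n. dist (x n) (x (Suc n)))"
  have dec: "d (Suc n) \<le> d n" for n
    unfolding d_def using mk_nonexp[OF mk al[of n]] by (simp add: xS)
  have dnn: "d n \<ge> 0" for n unfolding d_def by simp
  have small: "\<exists>n0. \<forall>j\<ge>n0. d j < \<eta>" if "\<eta> > 0" for \<eta>
  proof -
    have "decseq d" using dec by (simp add: decseq_SucI)
    then obtain L where L: "d \<longlonglongrightarrow> L" "\<forall>i. L \<le> d i"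
      using decseq_convergent[of d 0] dnn by blast
    have L0: "L \<ge> 0" using LIMSEQ_le_const[OF L(1), of 0] dnn by auto
    have "L = 0"
    proof (rule ccontr)
      assume "L \<noteq> 0"
      then have "L > 0" using L0 by simp
      with mk obtain \<delta> where "\<delta>>0" and H: "\<forall>x y. L \<le> dist x y \<and> dist x y < L + \<delta> \<longrightarrow> \<alpha> x y * dist (T x) (T y) < L"
        unfolding alpha_MK_contractive_def by blast
      have "eventually (\<lambda>n. d n < L + \<delta>) sequentially"
        using order_tendstoD(2)[OF L(1)] \<open>\<delta>>0\<close> by simp
      then obtain n where "d n < L + \<delta>" by (auto simp: eventually_sequentially)
      then have "dist (T (x n)) (T (x (Suc n))) < L"
        using mk_step[OF mk al[of n] H] unfolding d_def by simp
      then have "d (Suc n) < L" unfolding d_def by (simp add: xS)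
      then show False using L(2) by (meson not_less)
    qed
    then have "eventually (\<lambda>n. d n < \<eta>) sequentially"
      using order_tendstoD(2)[OF L(1)] that by simp
    then show ?thesis by (auto simp: eventually_sequentially)
  qed
  have chain: "dist (x a) (x (a+r)) \<le> real r * \<eta>" if "\<forall>j\<ge>a. d j < \<eta>" for a r \<eta>
  proof (induction r)
    case 0 then show ?case by simp
  next
    case (Suc r)
    have "dist (x a) (x (a + Suc r)) \<le> dist (x a) (x (a+r)) + dist (x (a+r)) (x (Suc (a+r)))"
      by (simp add: dist_triangle)
    also have "dist (x (a+r)) (x (Suc (a+r))) < \<eta>" using that unfolding d_def by auto
    finally show ?case using Suc by (simp add: algebra_simps)
  qed
  have ajump: "\<alpha> (x n) (x (n + k*N + 1)) \<ge> 1" for n k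
  proof (induction k)
    case 0 then show ?case using al[of n] by simp
  next
    case (Suc k)
    define xs where "xs = (\<lambda>i. if i = 0 then x n else x (n + k*N + i))"
    have "\<forall>i\<le>N. \<alpha> (xs i) (xs (Suc i)) \<ge> 1"
    proof (intro allI impI)
      fix i assume "i \<le> N"
      show "\<alpha> (xs i) (xs (Suc i)) \<ge> 1"
      proof (cases "i = 0")
        case True then show ?thesis using Suc by (simp add: xs_def)
      next
        case False then show ?thesis using al[of "n + k*N + i"] by (simp add: xs_def)
      qed
    qed
    then have "\<alpha> (xs 0) (xs (Suc N)) \<ge> 1" using assms(3) unfolding N_transitive_def by blast
    then show ?case by (simp add: xs_def algebra_simps)
  qed
  have "Cauchy x"
    unfolding Cauchy_def
  proof (intro allI impI)
    fix e :: real assume "e > 0"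
    define \<epsilon> where "\<epsilon> = e/4"
    have "\<epsilon> > 0" using \<open>e>0\<close> by (simp add: \<epsilon>_def)
    with mk obtain \<delta> where "\<delta>>0" and H: "\<forall>x y. \<epsilon> \<le> dist x y \<and> dist x y < \<epsilon> + \<delta> \<longrightarrow> \<alpha> x y * dist (T x) (T y) < \<epsilon>"
      unfolding alpha_MK_contractive_def by blast
    define \<delta>' where "\<delta>' = min \<delta> \<epsilon>"
    have "\<delta>' > 0" "\<delta>' \<le> \<epsilon>" "\<delta>' \<le> \<delta>" using \<open>\<delta>>0\<close> \<open>\<epsilon>>0\<close> by (auto simp: \<delta>'_def)
    have H': "\<forall>x y. \<epsilon> \<le> dist x y \<and> dist x y < \<epsilon> + \<delta>' \<longrightarrow> \<alpha> x y * dist (T x) (T y) < \<epsilon>"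
    proof (intro allI impI)
      fix a b :: 'a assume "\<epsilon> \<le> dist a b \<and> dist a b < \<epsilon> + \<delta>'"
      then have "\<epsilon> \<le> dist a b \<and> dist a b < \<epsilon> + \<delta>" using \<open>\<delta>' \<le> \<delta>\<close> by linarith
      then show "\<alpha> a b * dist (T a) (T b) < \<epsilon>" using H by blast
    qed
    define \<eta> where "\<eta> = \<delta>' / (2 * real N)"
    have Npos: "real N \<ge> 1" using assms(1) by simp
    have "\<eta> > 0" using \<open>\<delta>'>0\<close> Npos by (simp add: \<eta>_def)
    have Neta: "real N * \<eta> = \<delta>'/2" using Npos by (simp add: \<eta>_def)
    have "1 * \<eta> \<le> real N * \<eta>" using Npos \<open>\<eta>>0\<close> by (intro mult_right_mono) auto
    then have eta_le: "\<eta> \<le> \<delta>'/2" using Neta by simp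
    obtain n where n: "\<forall>j\<ge>n. d j < \<eta>" using small[OF \<open>\<eta>>0\<close>] by blast
    have C: "dist (x (n+1)) (x (n + k*N + 2)) < \<epsilon> + \<delta>'/2" for k
    proof (induction k)
      case 0
      have "d (n+1) < \<eta>" using n by simp
      then show ?case using eta_le \<open>\<epsilon>>0\<close> unfolding d_def by (simp add: numeral_2_eq_2)
    next
      case (Suc k)
      let ?b = "x (n + Suc k * N + 1)"
      have eq: "n + Suc k * N + 1 = (n + k*N + 2) + (N - 1)" using assms(1) by simp
      have c1: "dist (x (n + k*N + 2)) ?b \<le> real (N - 1) * \<eta>"
      proof -
        have "dist (x (n + k*N + 2)) (x ((n + k*N + 2) + (N - 1))) \<le> real (N - 1) * \<eta>"
          using chain[of "n + k*N + 2" \<eta> "N - 1"] n by auto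
        then show ?thesis by (simp only: eq)
      qed
      have "real (N - 1) * \<eta> = real N * \<eta> - \<eta>" using assms(1) by (simp add: of_nat_diff algebra_simps)
      have "dist (x n) ?b \<le> dist (x n) (x (n+1)) + dist (x (n+1)) (x (n + k*N + 2)) + dist (x (n + k*N + 2)) ?b"
        using dist_triangle[of "x n" ?b "x (n+1)"] dist_triangle[of "x (n+1)" ?b "x (n + k*N + 2)"] by linarith
      moreover have "dist (x n) (x (n+1)) < \<eta>" using n unfolding d_def by simp
      ultimately have "dist (x n) ?b < \<epsilon> + \<delta>'"
        using Suc c1 Neta \<open>real (N - 1) * \<eta> = real N * \<eta> - \<eta>\<close> by linarith
      then have "dist (T (x n)) (T ?b) < \<epsilon>" using mk_step[OF mk ajump[of n "Suc k"] H'] by simp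
      moreover have "n + Suc k * N + 2 = Suc (n + Suc k * N + 1)" by simp
      ultimately show ?case using \<open>\<delta>'>0\<close> by (simp add: xS)
    qed
    have B: "dist (x (n+1)) (x m) < 2*\<epsilon>" if "m \<ge> n+1" for m
    proof (cases "m = n+1")
      case True then show ?thesis using \<open>\<epsilon>>0\<close> by simp
    next
      case False
      define t where "t = m - n - 2"
      define k where "k = t div N"
      define r where "r = t mod N"
      have r: "r < N" using assms(1) by (simp add: r_def)
      have "t = k*N + r" unfolding k_def r_def by simp
      moreover have "m = n + 2 + t" using False that unfolding t_def by simp
      ultimately have m: "m = (n + k*N + 2) + r" by simp
      have c1: "dist (x (n + k*N + 2)) (x m) \<le> real r * \<eta>"
        using chain[of "n + k*N + 2" \<eta> r] n m by auto
      have "real r * \<eta> \<le> real N * \<eta>" using r \<open>\<eta>>0\<close> by simp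
      have "dist (x (n+1)) (x m) \<le> dist (x (n+1)) (x (n + k*N + 2)) + dist (x (n + k*N + 2)) (x m)"
        by (simp add: dist_triangle)
      then show ?thesis using C[of k] c1 \<open>real r * \<eta> \<le> real N * \<eta>\<close> Neta \<open>\<delta>' \<le> \<epsilon>\<close> by linarith
    qed
    show "\<exists>M. \<forall>m\<ge>M. \<forall>n\<ge>M. dist (x m) (x n) < e"
    proof (intro exI allI impI)
      fix p q assume "p \<ge> n+1" "q \<ge> n+1"
      have "dist (x p) (x q) \<le> dist (x (n+1)) (x p) + dist (x (n+1)) (x q)"
        by (simp add: dist_triangle3)
      then show "dist (x p) (x q) < e" using B[OF \<open>p \<ge> n+1\<close>] B[OF \<open>q \<ge> n+1\<close>] by (simp add: \<epsilon>_def)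
    qed
  qed
  then obtain p where p: "x \<longlonglongrightarrow> p" using Cauchy_convergent_iff convergent_def by blast
  have "alpha_orbital \<alpha> T x" unfolding alpha_orbital_def using al x0' by (simp add: x_def)
  then obtain r where r: "strict_mono r" "(\<lambda>k. T (x (r k))) \<longlonglongrightarrow> T p"
    using assms(7) p unfolding alpha_orbitally_continuous_def by blast
  have "strict_mono (\<lambda>k. Suc (r k))" using r(1) by (simp add: strict_mono_def)
  from LIMSEQ_subseq_LIMSEQ[OF p this] have "(\<lambda>k. T (x (r k))) \<longlonglongrightarrow> p"
    by (simp add: comp_def xS)
  then have "T p = p" using r(2) LIMSEQ_unique by blast
  then show ?thesis by blast
qed

end
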